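(* Let $\alpha\in(0,1)$, $k\ge1$ an integer, and $c=-\frac12\log\alpha$. Suppose $z_i\sim\mathcal N(\mu_i,2\mu_i)$ for $i=1,2,\dots$ with $0\le\mu_i\le\frac{-k\log\alpha}{2(k+i)}$ (where $\mathcal N(0,0)$ is the point mass at $0$). Then $$\mathbb E\,\#\{i\ge1:|z_i|>c\}\ \le\ C_3(\alpha)\,k,\qquad C_3(\alpha)=\int_0^\infty\Big[\Phi\Big(\tfrac{-(2+t)\sqrt c}{\sqrt{2+2t}}\Big)+1-\Phi\Big(\tfrac{t\sqrt c}{\sqrt{2+2t}}\Big)\Big]dt<\infty,$$ where $\Phi$ is the standard normal distribution function. *)

theory Defs
  imports "HOL-Probability.Probability"
begin

definition Phi :: "real \<Rightarrow> real" where
  "Phi x = measure (density lborel std_normal_density) {..x}"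

definition normal_law_2m :: "real \<Rightarrow> real measure" where
  "normal_law_2m m = (if m = 0 then return borel 0
                      else density lborel (normal_density m (sqrt (2 * m))))"

definition C3 :: "real \<Rightarrow> ennreal" where
  "C3 \<alpha> = (let c = - (1/2) * ln \<alpha> in
     \<integral>\<^sup>+ t. ennreal (Phi (- (2 + t) * sqrt c / sqrt (2 + 2 * t))
                      + 1 - Phi (t * sqrt c / sqrt (2 + 2 * t)))
            * indicator {0..} t \<partial>lborel)"

end

theory Submission
  imports Defs
begin


lemma normal_cdf:
  assumes s: "0 < \<sigma>"
  shows "measure (density lborel (normal_density m \<sigma>)) {..x} = Phi ((x - m) / \<sigma>)"
proof -
  let ?N = "density lborel (normal_density m \<sigma>)"
  interpret N: prob_space ?N by (rule prob_space_normal_density) (rule s)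
  have d: "distributed ?N lborel (\<lambda>x. x) (normal_density m \<sigma>)"
    unfolding distributed_def by (auto simp: distr_id2)
  have d2: "distributed ?N lborel (\<lambda>x. (x - m) / \<sigma>) std_normal_density"
    using N.normal_standard_normal_convert[OF s] d by simp
  have "Phi ((x - m) / \<sigma>) = measure (distr ?N lborel (\<lambda>x. (x - m) / \<sigma>)) {..(x - m) / \<sigma>}"
    unfolding Phi_def using distributed_distr_eq_density[OF d2] by simp
  also have "\<dots> = measure ?N ((\<lambda>x. (x - m) / \<sigma>) -` {..(x - m) / \<sigma>} \<inter> space ?N)"
    by (rule measure_distr) auto
  also have "(\<lambda>x. (x - m) / \<sigma>) -` {..(x - m) / \<sigma>} \<inter> space ?N = {..x}"
    using s by (auto simp: divide_le_cancel)
  finally show ?thesis by simp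
qed

lemma fact4: "(fact (2 * 2) / (2 ^ 2 * fact 2) :: real) = 3"
  by (simp add: fact_numeral)

lemma markov4:
  assumes a: "0 < a"
  shows "measure (density lborel std_normal_density) {x. a \<le> \<bar>x\<bar>} \<le> 3 / a ^ 4"
proof -
  let ?N = "density lborel std_normal_density"
  interpret N: prob_space ?N by (rule prob_space_normal_density) simp
  have hb: "has_bochner_integral lborel (\<lambda>x. std_normal_density x * x ^ (2 * 2) / a ^ 4) (3 / a ^ 4)"
    using has_bochner_integral_divide_zero[OF std_normal_moment_even[of 2], of "a ^ 4"] fact4 by simp
  have "emeasure ?N {x. a \<le> \<bar>x\<bar>} = (\<integral>\<^sup>+ x. std_normal_density x * indicator {x. a \<le> \<bar>x\<bar>} x \<partial>lborel)"
    by (subst emeasure_density) (auto intro!: nn_integral_cong simp: ennreal_mult' ennreal_indicator)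
  also have "\<dots> \<le> (\<integral>\<^sup>+ x. ennreal (std_normal_density x * x ^ (2 * 2) / a ^ 4) \<partial>lborel)"
  proof (rule nn_integral_mono)
    fix x
    have "indicator {x. a \<le> \<bar>x\<bar>} x \<le> x ^ 4 / a ^ 4"
    proof (cases "a \<le> \<bar>x\<bar>")
      case True
      then have "a ^ 4 \<le> \<bar>x\<bar> ^ 4" using a by (intro power_mono) auto
      then have "a ^ 4 \<le> x ^ 4" by (simp add: power_even_abs_numeral)
      then show ?thesis using True a by (simp add: le_divide_eq)
    qed (auto)
    then have "std_normal_density x * indicator {x. a \<le> \<bar>x\<bar>} x \<le> std_normal_density x * (x ^ 4 / a ^ 4)"
      by (rule mult_left_mono) simp
    then show "ennreal (std_normal_density x * indicator {x. a \<le> \<bar>x\<bar>} x) \<le> ennreal (std_normal_density x * x ^ (2 * 2) / a ^ 4)"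
      by (intro ennreal_leI) simp
  qed
  also have "\<dots> = ennreal (3 / a ^ 4)"
    using hb by (subst nn_integral_eq_integral) (auto simp: has_bochner_integral_iff intro!: divide_nonneg_nonneg)
  finally show ?thesis
    using a by (simp add: N.emeasure_eq_measure)
qed



lemma ineqs:
  fixes c \<mu> t :: real
  assumes c: "0 < c" and m: "0 < \<mu>" and t: "0 \<le> t" and le: "(1 + t) * \<mu> \<le> c"
  shows "(- c - \<mu>) / sqrt (2 * \<mu>) \<le> - (2 + t) * sqrt c / sqrt (2 + 2 * t)"
    and "t * sqrt c / sqrt (2 + 2 * t) \<le> (c - \<mu>) / sqrt (2 * \<mu>)"
proof -
  define r where "r = sqrt c"
  define s where "s = sqrt \<mu>"
  define u where "u = sqrt (1 + t)"
  have r: "0 < r" "r\<^sup>2 = c" using c by (auto simp: r_def)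
  have s: "0 < s" "s\<^sup>2 = \<mu>" using m by (auto simp: s_def)
  have u: "1 \<le> u" "u\<^sup>2 = 1 + t" using t by (auto simp: u_def)
  have e1: "sqrt (2 * \<mu>) = sqrt 2 * s" by (simp add: s_def real_sqrt_mult)
  have e2: "sqrt (2 + 2 * t) = sqrt 2 * u"
    by (simp add: u_def real_sqrt_mult[symmetric] algebra_simps)
  have "sqrt ((1 + t) * \<mu>) \<le> sqrt c" using le by simp
  hence us: "u * s \<le> r" by (simp add: u_def s_def r_def real_sqrt_mult)
  have s2: "0 < sqrt (2::real)" by simp
  have p1: "0 \<le> (r - u * s) * (u * r - s)"
  proof -
    have "r \<le> u * r" "s \<le> u * s" using u r s by auto
    thus ?thesis using us by (intro mult_nonneg_nonneg) auto
  qed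
  have p2: "0 \<le> (r - u * s) * (u * r + s)"
    using us u r s by (intro mult_nonneg_nonneg) auto
  have k1: "(u\<^sup>2 + 1) * r * s \<le> (r\<^sup>2 + s\<^sup>2) * u"
    using p1 by (simp add: algebra_simps power2_eq_square)
  have k2: "(u\<^sup>2 - 1) * r * s \<le> (r\<^sup>2 - s\<^sup>2) * u"
    using p2 by (simp add: algebra_simps power2_eq_square)
  have "(- c - \<mu>) / sqrt (2 * \<mu>) = - (r\<^sup>2 + s\<^sup>2) / (sqrt 2 * s)"
    using r s e1 by simp
  also have "\<dots> \<le> - (u\<^sup>2 + 1) * r / (sqrt 2 * u)"
    using k1 s2 u s by (simp add: divide_simps) (simp add: algebra_simps)
  also have "\<dots> = - (2 + t) * sqrt c / sqrt (2 + 2 * t)"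
    using u e2 by (simp add: r_def)
  finally show "(- c - \<mu>) / sqrt (2 * \<mu>) \<le> - (2 + t) * sqrt c / sqrt (2 + 2 * t)" .
  have "t * sqrt c / sqrt (2 + 2 * t) = (u\<^sup>2 - 1) * r / (sqrt 2 * u)"
    using u e2 by (simp add: r_def)
  also have "\<dots> \<le> (r\<^sup>2 - s\<^sup>2) / (sqrt 2 * s)"
    using k2 s2 u s by (simp add: divide_simps)
  also have "\<dots> = (c - \<mu>) / sqrt (2 * \<mu>)"
    using r s e1 by simp
  finally show "t * sqrt c / sqrt (2 + 2 * t) \<le> (c - \<mu>) / sqrt (2 * \<mu>)" .
qed



lemma Phi_mono: "x \<le> y \<Longrightarrow> Phi x \<le> Phi y"
proof -
  assume xy: "x \<le> y"
  interpret N: prob_space "density lborel std_normal_density" by (rule prob_space_normal_density) simp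
  show ?thesis unfolding Phi_def using xy by (intro N.finite_measure_mono) auto
qed

lemma Phi_bounds: "0 \<le> Phi x" "Phi x \<le> 1"
proof -
  interpret N: prob_space "density lborel std_normal_density" by (rule prob_space_normal_density) simp
  show "0 \<le> Phi x" "Phi x \<le> 1" unfolding Phi_def by auto
qed

lemma Phi_upper: "1 - Phi a = measure (density lborel std_normal_density) {a<..}"
proof -
  interpret N: prob_space "density lborel std_normal_density" by (rule prob_space_normal_density) simp
  have "measure (density lborel std_normal_density) (space (density lborel std_normal_density) - {..a}) = 1 - Phi a"
    unfolding Phi_def by (rule N.prob_compl) simp
  moreover have "space (density lborel std_normal_density) - {..a} = {a<..}" by auto
  ultimately show ?thesis by simp
qed

lemma Phi_tail: "0 < a \<Longrightarrow> 1 - Phi a \<le> 3 / a ^ 4"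
proof -
  assume a: "0 < a"
  interpret N: prob_space "density lborel std_normal_density" by (rule prob_space_normal_density) simp
  have "1 - Phi a \<le> measure (density lborel std_normal_density) {x. a \<le> \<bar>x\<bar>}"
    unfolding Phi_upper by (intro N.finite_measure_mono) auto
  also have "\<dots> \<le> 3 / a ^ 4" by (rule markov4[OF a])
  finally show ?thesis .
qed

lemma Phi_tail_neg: "0 < a \<Longrightarrow> a \<le> b \<Longrightarrow> Phi (- b) \<le> 3 / a ^ 4"
proof -
  assume a: "0 < a" and ab: "a \<le> b"
  interpret N: prob_space "density lborel std_normal_density" by (rule prob_space_normal_density) simp
  have "Phi (- b) \<le> measure (density lborel std_normal_density) {x. a \<le> \<bar>x\<bar>}"
    unfolding Phi_def using a ab by (intro N.finite_measure_mono) auto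
  also have "\<dots> \<le> 3 / a ^ 4" by (rule markov4[OF a])
  finally show ?thesis .
qed

lemma law_bound:
  fixes c \<mu> t :: real
  assumes c: "0 < c" and m: "0 \<le> \<mu>" and t: "0 \<le> t" and le: "(1 + t) * \<mu> \<le> c"
  shows "emeasure (normal_law_2m \<mu>) {x. c < \<bar>x\<bar>} \<le>
    ennreal (Phi (- (2 + t) * sqrt c / sqrt (2 + 2 * t)) + 1 - Phi (t * sqrt c / sqrt (2 + 2 * t)))"
proof (cases "\<mu> = 0")
  case True
  have "emeasure (normal_law_2m \<mu>) {x. c < \<bar>x\<bar>} = 0"
    using True c by (simp add: normal_law_2m_def emeasure_return)
  then show ?thesis by simp
next
  case False
  hence m': "0 < \<mu>" using m by simp
  define \<sigma> where "\<sigma> = sqrt (2 * \<mu>)"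
  have s: "0 < \<sigma>" using m' by (simp add: \<sigma>_def)
  let ?N = "density lborel (normal_density \<mu> \<sigma>)"
  interpret N: prob_space ?N by (rule prob_space_normal_density) (rule s)
  have law: "normal_law_2m \<mu> = ?N" using False by (simp add: normal_law_2m_def \<sigma>_def)
  have "measure ?N {x. c < \<bar>x\<bar>} \<le> measure ?N ({..-c} \<union> {c<..})"
    by (intro N.finite_measure_mono) auto
  also have "\<dots> \<le> measure ?N {..-c} + measure ?N {c<..}"
    by (rule measure_Un_le) auto
  also have "measure ?N {c<..} = 1 - measure ?N {..c}"
  proof -
    have "measure ?N (space ?N - {..c}) = 1 - measure ?N {..c}" by (rule N.prob_compl) simp
    moreover have "space ?N - {..c} = {c<..}" by auto
    ultimately show ?thesis by simp
  qed
  also have "measure ?N {..-c} = Phi ((- c - \<mu>) / \<sigma>)" by (rule normal_cdf[OF s])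
  also have "measure ?N {..c} = Phi ((c - \<mu>) / \<sigma>)" by (rule normal_cdf[OF s])
  also have "Phi ((- c - \<mu>) / \<sigma>) + (1 - Phi ((c - \<mu>) / \<sigma>)) \<le>
      Phi (- (2 + t) * sqrt c / sqrt (2 + 2 * t)) + 1 - Phi (t * sqrt c / sqrt (2 + 2 * t))"
    using Phi_mono[OF ineqs(1)[OF c m' t le]] Phi_mono[OF ineqs(2)[OF c m' t le]]
    unfolding \<sigma>_def by simp
  finally show ?thesis unfolding law N.emeasure_eq_measure by (rule ennreal_leI)
qed



lemma g_small:
  fixes c t :: real
  assumes c: "0 < c" and t: "1 \<le> t"
  shows "Phi (- (2 + t) * sqrt c / sqrt (2 + 2 * t)) + 1 - Phi (t * sqrt c / sqrt (2 + 2 * t))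
     \<le> 96 / c\<^sup>2 * t powr -2"
proof -
  define a where "a = t * sqrt c / sqrt (2 + 2 * t)"
  define b where "b = (2 + t) * sqrt c / sqrt (2 + 2 * t)"
  have a: "0 < a" using c t by (simp add: a_def)
  have ab: "a \<le> b" unfolding a_def b_def using c t by (intro divide_right_mono mult_right_mono) auto
  have mb: "- (2 + t) * sqrt c / sqrt (2 + 2 * t) = - b" by (simp only: b_def mult_minus_left divide_minus_left)
  have "Phi (- b) + 1 - Phi a \<le> 6 / a ^ 4"
    using Phi_tail[OF a] Phi_tail_neg[OF a ab] by simp
  also have "6 / a ^ 4 \<le> 96 / c\<^sup>2 * t powr -2"
  proof -
    have a2: "a\<^sup>2 = t\<^sup>2 * c / (2 + 2 * t)"
      using c t by (simp add: a_def power_divide power_mult_distrib)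
    have "t * c / 4 \<le> t\<^sup>2 * c / (2 + 2 * t)"
      using c t by (simp add: divide_simps power2_eq_square)
    hence a2': "t * c / 4 \<le> a\<^sup>2" using a2 by simp
    have "(t * c / 4)\<^sup>2 \<le> (a\<^sup>2)\<^sup>2" using a2' c t by (intro power_mono) auto
    hence a4: "(t * c / 4)\<^sup>2 \<le> a ^ 4" by (simp add: power_mult[symmetric])
    have pos: "0 < (t * c / 4)\<^sup>2" using c t by simp
    have "6 / a ^ 4 \<le> 6 / (t * c / 4)\<^sup>2"
      using a4 pos a by (intro divide_left_mono mult_pos_pos) auto
    also have "\<dots> = 96 / c\<^sup>2 * t powr -2"
      using c t by (simp add: powr_minus powr_numeral divide_simps power_mult_distrib)
    finally show ?thesis .
  qed
  finally show ?thesis unfolding mb a_def .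
qed

lemma tail_integral:
  assumes c: "0 < c"
  shows "(\<integral>\<^sup>+ t. ennreal (96 / c\<^sup>2 * (if t \<in> {1..} then t powr -2 else 0)) \<partial>lborel) = ennreal (96 / c\<^sup>2)"
proof -
  have "((\<lambda>x::real. x powr -2) has_integral 1) {1..}"
    using has_integral_powr_to_inf[of "-2" 1] by simp
  hence "((\<lambda>x::real. if x \<in> {1..} then x powr -2 else 0) has_integral 1) UNIV"
    using has_integral_restrict_UNIV[of "{1..}" "\<lambda>x::real. x powr -2" 1] by simp
  hence h: "((\<lambda>x::real. 96 / c\<^sup>2 * (if x \<in> {1..} then x powr -2 else 0)) has_integral 96 / c\<^sup>2) UNIV"
    using has_integral_mult_right[of _ 1 UNIV "96 / c\<^sup>2"] by simp
  show ?thesis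
    by (rule nn_integral_has_integral_lborel[OF _ _ h]) auto
qed

lemma C3_finite:
  assumes "0 < \<alpha>" "\<alpha> < 1"
  shows "C3 \<alpha> < \<infinity>"
proof -
  define c where "c = - (1/2) * ln \<alpha>"
  have c: "0 < c" using assms by (simp add: c_def)
  define g where "g t = Phi (- (2 + t) * sqrt c / sqrt (2 + 2 * t)) + 1 - Phi (t * sqrt c / sqrt (2 + 2 * t))" for t
  have C: "C3 \<alpha> = (\<integral>\<^sup>+ t. ennreal (g t) * indicator {0..} t \<partial>lborel)"
    unfolding C3_def Let_def c_def[symmetric] g_def ..
  have pw: "ennreal (g t) * indicator {0..} t \<le>
     ennreal 2 * indicator {0..1} t + ennreal (96 / c\<^sup>2 * (if t \<in> {1..} then t powr -2 else 0))" for t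
  proof (cases "t < 0")
    case True then show ?thesis by simp
  next
    case False
    show ?thesis
    proof (cases "t \<le> 1")
      case True
      have "g t \<le> 2" unfolding g_def using Phi_bounds[of "- (2 + t) * sqrt c / sqrt (2 + 2 * t)"]
          Phi_bounds[of "t * sqrt c / sqrt (2 + 2 * t)"] by simp
      hence "ennreal (g t) \<le> ennreal 2" by (rule ennreal_leI)
      then show ?thesis using True False by (simp add: add_increasing2)
    next
      case f2: False
      have "g t \<le> 96 / c\<^sup>2 * t powr -2" unfolding g_def using g_small[OF c] f2 by simp
      hence "ennreal (g t) \<le> ennreal (96 / c\<^sup>2 * (if t \<in> {1..} then t powr -2 else 0))"
        using f2 by (intro ennreal_leI) simp
      then show ?thesis using False by (simp add: add_increasing)
    qed
  qed
  have "C3 \<alpha> \<le> (\<integral>\<^sup>+ t. ennreal 2 * indicator {0..1} t + ennreal (96 / c\<^sup>2 * (if t \<in> {1..} then t powr -2 else 0)) \<partial>lborel)"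
    unfolding C by (rule nn_integral_mono) (rule pw)
  also have "\<dots> = (\<integral>\<^sup>+ (t::real). ennreal 2 * indicator {0..1} t \<partial>lborel) + (\<integral>\<^sup>+ t. ennreal (96 / c\<^sup>2 * (if t \<in> {1..} then t powr -2 else 0)) \<partial>lborel)"
    by (intro nn_integral_add) measurable
  also have "\<dots> = ennreal 2 + ennreal (96 / c\<^sup>2)"
    using tail_integral[OF c] by (simp add: nn_integral_cmult_indicator)
  also have "\<dots> < \<infinity>" by simp
  finally show ?thesis .
qed



theorem lemma1:
  fixes M :: "'a measure" and z :: "nat \<Rightarrow> 'a \<Rightarrow> real" and \<mu> :: "nat \<Rightarrow> real"
    and \<alpha> :: real and k :: nat
  assumes "prob_space M"
    and "0 < \<alpha>" and "\<alpha> < 1" and "k \<ge> 1"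
    and "\<And>i. i \<ge> 1 \<Longrightarrow> z i \<in> borel_measurable M"
    and "\<And>i. i \<ge> 1 \<Longrightarrow> 0 \<le> \<mu> i"
    and "\<And>i. i \<ge> 1 \<Longrightarrow> \<mu> i \<le> - real k * ln \<alpha> / (2 * (real k + real i))"
    and "\<And>i. i \<ge> 1 \<Longrightarrow> distr M borel (z i) = normal_law_2m (\<mu> i)"
  shows "C3 \<alpha> < \<infinity> \<and>
    (\<integral>\<^sup>+ \<omega>. (\<Sum>i. indicator {\<omega>\<in>space M. \<bar>z (Suc i) \<omega>\<bar> > - (1/2) * ln \<alpha>} \<omega>) \<partial>M)
      \<le> C3 \<alpha> * of_nat k"
proof
  show "C3 \<alpha> < \<infinity>" using C3_finite assms(2,3) by blast
  define c where "c = - (1/2) * ln \<alpha>"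
  have c: "0 < c" using assms(2,3) by (simp add: c_def)
  define g where "g t = Phi (- (2 + t) * sqrt c / sqrt (2 + 2 * t)) + 1 - Phi (t * sqrt c / sqrt (2 + 2 * t))" for t
  have C: "C3 \<alpha> = (\<integral>\<^sup>+ t. ennreal (g t) * indicator {0..} t \<partial>lborel)"
    unfolding C3_def Let_def c_def[symmetric] g_def ..
  define A where "A i = {\<omega>\<in>space M. c < \<bar>z (Suc i) \<omega>\<bar>}" for i
  define p where "p i = emeasure M (A i)" for i
  define I where "I i = {real i / real k ..< real (Suc i) / real k}" for i
  have k: "0 < real k" using assms(4) by simp
  have zm[measurable]: "z (Suc i) \<in> borel_measurable M" for i using assms(5) by simp
  have Am[measurable]: "A i \<in> sets M" for i unfolding A_def by measurable
  have lhs: "(\<integral>\<^sup>+ \<omega>. (\<Sum>i. indicator {\<omega>\<in>space M. \<bar>z (Suc i) \<omega>\<bar> > - (1/2) * ln \<alpha>} \<omega>) \<partial>M) = (\<Sum>i. p i)"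
    unfolding c_def[symmetric] A_def[symmetric] p_def
    by (subst nn_integral_suminf) auto
  have pbound: "p i \<le> ennreal (g t)" if t: "t \<in> I i" for i t
  proof -
    have tI: "real i / real k \<le> t" using t by (simp add: I_def)
    have t0: "0 \<le> t" by (rule order_trans[OF _ tI]) simp
    have tle: "t * k \<le> real i + 1" using t k by (auto simp: I_def field_simps)
    have m0: "0 \<le> \<mu> (Suc i)" using assms(6) by simp
    have mle: "\<mu> (Suc i) \<le> c * real k / (real k + (real i + 1))"
      using assms(7)[of "Suc i"] by (simp add: c_def field_simps)
    hence a1: "\<mu> (Suc i) * (real k + (real i + 1)) \<le> c * real k" using k by (simp add: field_simps)
    have a2: "\<mu> (Suc i) * (real k + t * real k) \<le> \<mu> (Suc i) * (real k + (real i + 1))"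
      using tle m0 by (intro mult_left_mono) auto
    have a3: "(1 + t) * \<mu> (Suc i) * real k = \<mu> (Suc i) * (real k + t * real k)"
      by (simp add: algebra_simps)
    have "(1 + t) * \<mu> (Suc i) * real k \<le> c * real k" using a1 a2 a3 by linarith
    hence le: "(1 + t) * \<mu> (Suc i) \<le> c" using k by simp
    have "p i = emeasure (distr M borel (z (Suc i))) {x. c < \<bar>x\<bar>}"
      unfolding p_def A_def by (subst emeasure_distr) (auto intro!: arg_cong[where f="emeasure M"])
    also have "\<dots> = emeasure (normal_law_2m (\<mu> (Suc i))) {x. c < \<bar>x\<bar>}"
      using assms(8)[of "Suc i"] by simp
    also have "\<dots> \<le> ennreal (g t)" unfolding g_def by (rule law_bound[OF c m0 t0 le])
    finally show ?thesis .
  qed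
  have disj: "disjoint_family I"
    unfolding disjoint_family_on_def
  proof (intro ballI impI)
    fix i j :: nat assume "i \<noteq> j"
    hence "Suc i \<le> j \<or> Suc j \<le> i" by auto
    thus "I i \<inter> I j = {}"
    proof
      assume "Suc i \<le> j"
      hence "real (Suc i) / k \<le> real j / k" using k by (intro divide_right_mono) auto
      thus ?thesis by (auto simp: I_def)
    next
      assume "Suc j \<le> i"
      hence "real (Suc j) / k \<le> real i / k" using k by (intro divide_right_mono) auto
      thus ?thesis by (auto simp: I_def)
    qed
  qed
  have UI: "(\<Union>i. I i) \<subseteq> {0..}"
  proof
    fix x assume "x \<in> (\<Union>i. I i)"
    then obtain i where xi: "real i / real k \<le> x" by (auto simp: I_def)
    have "0 \<le> x" by (rule order_trans[OF _ xi]) simp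
    thus "x \<in> {0..}" by simp
  qed
  have emI: "emeasure lborel (I i) = ennreal (1 / real k)" for i
    unfolding I_def using k by (simp add: divide_right_mono diff_divide_distrib[symmetric])
  have "(\<Sum>i. p i * ennreal (1 / real k)) = (\<Sum>i. \<integral>\<^sup>+ t. p i * indicator (I i) t \<partial>lborel)"
  proof (rule suminf_cong)
    fix i
    have "I i \<in> sets lborel" by (simp add: I_def)
    thus "p i * ennreal (1 / real k) = (\<integral>\<^sup>+ t. p i * indicator (I i) t \<partial>lborel)"
      by (simp only: nn_integral_cmult_indicator emI)
  qed
  also have "\<dots> = (\<integral>\<^sup>+ t. (\<Sum>i. p i * indicator (I i) t) \<partial>lborel)"
    by (subst nn_integral_suminf) (auto simp: I_def)
  also have "\<dots> \<le> (\<integral>\<^sup>+ t. (\<Sum>i. ennreal (g t) * indicator (I i) t) \<partial>lborel)"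
  proof (rule nn_integral_mono)
    fix t
    show "(\<Sum>i. p i * indicator (I i) t) \<le> (\<Sum>i. ennreal (g t) * indicator (I i) t)"
    proof (rule suminf_le)
      fix i show "p i * indicator (I i) t \<le> ennreal (g t) * indicator (I i) t"
        using pbound[of t i] by (cases "t \<in> I i") auto
    qed auto
  qed
  also have "\<dots> = (\<integral>\<^sup>+ t. ennreal (g t) * indicator (\<Union>i. I i) t \<partial>lborel)"
    using suminf_indicator[OF disj] by simp
  also have "\<dots> \<le> (\<integral>\<^sup>+ t. ennreal (g t) * indicator {0..} t \<partial>lborel)"
  proof (rule nn_integral_mono)
    fix t show "ennreal (g t) * indicator (\<Union>i. I i) t \<le> ennreal (g t) * indicator {0..} t"
      using UI by (cases "t \<in> (\<Union>i. I i)") (auto simp: subset_iff)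
  qed
  finally have main: "(\<Sum>i. p i * ennreal (1 / real k)) \<le> C3 \<alpha>" unfolding C .
  have ek: "ennreal (1 / real k) * of_nat k = 1"
    using k by (simp add: ennreal_of_nat_eq_real_of_nat ennreal_mult''[symmetric])
  have "(\<Sum>i. p i) = (\<Sum>i. p i * ennreal (1 / real k)) * of_nat k"
    by (simp add: mult.assoc ek)
  also have "\<dots> \<le> C3 \<alpha> * of_nat k" using main by (rule mult_right_mono) simp
  finally show "(\<integral>\<^sup>+ \<omega>. (\<Sum>i. indicator {\<omega>\<in>space M. \<bar>z (Suc i) \<omega>\<bar> > - (1/2) * ln \<alpha>} \<omega>) \<partial>M)
      \<le> C3 \<alpha> * of_nat k" unfolding lhs .
qed

end
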